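(* Let $\mathbb{C}$ be a majority category with finite products, $n\geqslant 3$, and $R$ a subobject of $A_1\times A_2\times\cdots\times A_n$. Let $a_k:S\to A_k$ ($k=1,\dots,n$), $x:S\to A_1$, $y:S\to A_2$, $z:S\to A_3$ be morphisms. If $(x,a_2,a_3,\dots,a_n)\in_S R$, $(a_1,y,a_3,\dots,a_n)\in_S R$ and $(a_1,a_2,z,a_4,\dots,a_n)\in_S R$, then $(a_1,a_2,a_3,\dots,a_n)\in_S R$.
   Context: For a morphism $w:S\to W$ and a subobject $A$ of $W$, $w\in_S A$ means $w$ factors through a (any) mono representing $A$. A ternary relation $R\leqslant X\times Y\times Z$ is majority-selecting if for all $S$ and $x,x':S\to X$, $y,y':S\to Y$, $z,z':S\to Z$: $(x,y,z')\in_S R$, $(x,y',z)\in_S R$, $(x',y,z)\in_S R$ imply $(x,y,z)\in_S R$. A category with products is a majority category if every ternary relation (subobject of a product of three objects) is majority-selecting. *)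

theory Defs
  imports Main
begin

text \<open>A category given by explicit data: objects, arrows, domain, codomain,
identities and composition (Comp g f = g after f).\<close>

record ('o, 'a) cat =
  Obj :: "'o set"
  Arr :: "'a set"
  Dom :: "'a \<Rightarrow> 'o"
  Cod :: "'a \<Rightarrow> 'o"
  Id :: "'o \<Rightarrow> 'a"
  Comp :: "'a \<Rightarrow> 'a \<Rightarrow> 'a"

definition hom :: "('o, 'a) cat \<Rightarrow> 'a \<Rightarrow> 'o \<Rightarrow> 'o \<Rightarrow> bool" where
  "hom C f X Y \<longleftrightarrow> f \<in> Arr C \<and> Dom C f = X \<and> Cod C f = Y"

definition category :: "('o, 'a) cat \<Rightarrow> bool" where
  "category C \<longleftrightarrow>
     (\<forall>f \<in> Arr C. Dom C f \<in> Obj C \<and> Cod C f \<in> Obj C) \<and>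
     (\<forall>X \<in> Obj C. hom C (Id C X) X X) \<and>
     (\<forall>f g X Y Z. hom C f X Y \<longrightarrow> hom C g Y Z \<longrightarrow> hom C (Comp C g f) X Z) \<and>
     (\<forall>f X Y. hom C f X Y \<longrightarrow> Comp C f (Id C X) = f \<and> Comp C (Id C Y) f = f) \<and>
     (\<forall>f g h W X Y Z. hom C f W X \<longrightarrow> hom C g X Y \<longrightarrow> hom C h Y Z \<longrightarrow>
        Comp C h (Comp C g f) = Comp C (Comp C h g) f)"

definition is_product :: "('o, 'a) cat \<Rightarrow> 'o list \<Rightarrow> 'o \<Rightarrow> 'a list \<Rightarrow> bool" where
  "is_product C As P ps \<longleftrightarrow>
     P \<in> Obj C \<and> length ps = length As \<and>
     (\<forall>i < length As. hom C (ps ! i) P (As ! i)) \<and>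
     (\<forall>S \<in> Obj C. \<forall>fs. length fs = length As \<longrightarrow>
        (\<forall>i < length As. hom C (fs ! i) S (As ! i)) \<longrightarrow>
        (\<exists>!h. hom C h S P \<and> (\<forall>i < length As. Comp C (ps ! i) h = fs ! i)))"

definition has_finite_products :: "('o, 'a) cat \<Rightarrow> bool" where
  "has_finite_products C \<longleftrightarrow>
     (\<forall>As. set As \<subseteq> Obj C \<longrightarrow> (\<exists>P ps. is_product C As P ps))"

definition tuple :: "('o, 'a) cat \<Rightarrow> 'o \<Rightarrow> 'o \<Rightarrow> 'a list \<Rightarrow> 'a list \<Rightarrow> 'a" where
  "tuple C S P ps fs =
     (THE h. hom C h S P \<and> (\<forall>i < length ps. Comp C (ps ! i) h = fs ! i))"

definition mono :: "('o, 'a) cat \<Rightarrow> 'a \<Rightarrow> bool" where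
  "mono C m \<longleftrightarrow> m \<in> Arr C \<and>
     (\<forall>g h W. hom C g W (Dom C m) \<longrightarrow> hom C h W (Dom C m) \<longrightarrow>
        Comp C m g = Comp C m h \<longrightarrow> g = h)"

text \<open>w \<in>_S A : w factors through the mono m representing the subobject A.\<close>

definition member :: "('o, 'a) cat \<Rightarrow> 'a \<Rightarrow> 'a \<Rightarrow> bool" where
  "member C w m \<longleftrightarrow> (\<exists>u. hom C u (Dom C w) (Dom C m) \<and> Comp C m u = w)"

definition majority_category :: "('o, 'a) cat \<Rightarrow> bool" where
  "majority_category C \<longleftrightarrow> category C \<and> has_finite_products C \<and>
     (\<forall>X Y Z P ps m. X \<in> Obj C \<longrightarrow> Y \<in> Obj C \<longrightarrow> Z \<in> Obj C \<longrightarrow>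
        is_product C [X, Y, Z] P ps \<longrightarrow> mono C m \<longrightarrow> Cod C m = P \<longrightarrow>
        (\<forall>S x x' y y' z z'. S \<in> Obj C \<longrightarrow>
           hom C x S X \<longrightarrow> hom C x' S X \<longrightarrow> hom C y S Y \<longrightarrow> hom C y' S Y \<longrightarrow>
           hom C z S Z \<longrightarrow> hom C z' S Z \<longrightarrow>
           member C (tuple C S P ps [x, y, z']) m \<longrightarrow>
           member C (tuple C S P ps [x, y', z]) m \<longrightarrow>
           member C (tuple C S P ps [x', y, z]) m \<longrightarrow>
           member C (tuple C S P ps [x, y, z]) m))"

end

theory Submission
  imports Defs
begin

lemma hom_comp: "category C \<Longrightarrow> hom C f X Y \<Longrightarrow> hom C g Y Z \<Longrightarrow> hom C (Comp C g f) X Z"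
  unfolding category_def by blast

lemma hom_assoc: "category C \<Longrightarrow> hom C f W X \<Longrightarrow> hom C g X Y \<Longrightarrow> hom C h Y Z \<Longrightarrow>
   Comp C h (Comp C g f) = Comp C (Comp C h g) f"
  unfolding category_def by blast

lemma hom_obj: "category C \<Longrightarrow> hom C f X Y \<Longrightarrow> X \<in> Obj C \<and> Y \<in> Obj C"
  unfolding category_def hom_def by blast

lemma product_basic: "is_product C As P ps \<Longrightarrow>
  P \<in> Obj C \<and> length ps = length As \<and> (\<forall>i < length As. hom C (ps ! i) P (As ! i))"
  unfolding is_product_def by blast

lemma tuple_props:
  assumes "is_product C As P ps" "S \<in> Obj C" "length fs = length As"
    "\<forall>i < length As. hom C (fs ! i) S (As ! i)"
  shows "hom C (tuple C S P ps fs) S P \<and> (\<forall>i < length As. Comp C (ps ! i) (tuple C S P ps fs) = fs ! i)"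
proof -
  have lp: "length ps = length As" using assms(1) unfolding is_product_def by blast
  have "\<exists>!h. hom C h S P \<and> (\<forall>i < length As. Comp C (ps ! i) h = fs ! i)"
    using assms unfolding is_product_def by blast
  then show ?thesis unfolding tuple_def lp by (rule theI')
qed

lemma tuple_unique:
  assumes "is_product C As P ps" "S \<in> Obj C" "length fs = length As"
    "\<forall>i < length As. hom C (fs ! i) S (As ! i)"
    "hom C h S P" "\<forall>i < length As. Comp C (ps ! i) h = fs ! i"
  shows "h = tuple C S P ps fs"
proof -
  have "\<exists>!h. hom C h S P \<and> (\<forall>i < length As. Comp C (ps ! i) h = fs ! i)"
    using assms unfolding is_product_def by blast
  then show ?thesis using tuple_props[OF assms(1-4)] assms(5,6) by blast
qed

lemma prod_ext:
  assumes "category C" "is_product C As P ps" "hom C g S P" "hom C h S P"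
    "\<forall>i < length As. Comp C (ps ! i) g = Comp C (ps ! i) h"
  shows "g = h"
proof -
  have S: "S \<in> Obj C" using hom_obj[OF assms(1,3)] by blast
  define fs where "fs = map (\<lambda>i. Comp C (ps ! i) g) [0..<length As]"
  have hs: "\<forall>i < length As. hom C (fs ! i) S (As ! i)"
    using assms(1,2,3) unfolding fs_def is_product_def by (auto intro: hom_comp)
  have "g = tuple C S P ps fs"
    by (rule tuple_unique[OF assms(2) S _ hs assms(3)]) (auto simp: fs_def)
  moreover have "h = tuple C S P ps fs"
    by (rule tuple_unique[OF assms(2) S _ hs assms(4)]) (use assms(5) in \<open>auto simp: fs_def\<close>)
  ultimately show ?thesis by simp
qed

theorem lemma5p6:
  fixes C :: "('o, 'a) cat"
    and As :: "'o list" and P :: 'o and ps :: "'a list" and m :: 'a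
    and S :: 'o and as :: "'a list" and x y z :: 'a and n :: nat
  assumes "majority_category C"
    and "has_finite_products C"
    and "n \<ge> 3" and "length As = n" and "set As \<subseteq> Obj C"
    and "is_product C As P ps"
    and "mono C m" and "Cod C m = P"
    and "S \<in> Obj C" and "length as = n"
    and "\<forall>k < n. hom C (as ! k) S (As ! k)"
    and "hom C x S (As ! 0)" and "hom C y S (As ! 1)" and "hom C z S (As ! 2)"
    and "member C (tuple C S P ps (as[0 := x])) m"
    and "member C (tuple C S P ps (as[1 := y])) m"
    and "member C (tuple C S P ps (as[2 := z])) m"
  shows "member C (tuple C S P ps as) m"
proof -
  note maj = assms(1)[unfolded majority_category_def]
  have cat: "category C" using maj by blast
  note prodP = assms(6)
  have lps: "length ps = n" and psh: "\<forall>i<n. hom C (ps ! i) P (As ! i)" and PO: "P \<in> Obj C"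
    using product_basic[OF prodP] assms(4) by auto
  have A0: "As ! 0 \<in> Obj C" and A1: "As ! 1 \<in> Obj C"
    using assms(3,4,5) nth_mem[of 0 As] nth_mem[of 1 As] by (auto simp del: nth_mem)
  have "set (drop 2 As) \<subseteq> Obj C" using assms(5) set_drop_subset by (rule order_trans[rotated])
  then obtain Q qs where prodQ: "is_product C (drop 2 As) Q qs"
    using assms(2) unfolding has_finite_products_def by (meson)
  have QO: "Q \<in> Obj C" and lqs: "length qs = n - 2"
    and qsh: "\<forall>i<n-2. hom C (qs ! i) Q (As ! (i+2))"
    using product_basic[OF prodQ] assms(4) by auto
  have "set [As ! 0, As ! 1, Q] \<subseteq> Obj C" using A0 A1 QO by auto
  then obtain P' ps' where prodP': "is_product C [As ! 0, As ! 1, Q] P' ps'"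
    using assms(2) unfolding has_finite_products_def by (meson)
  have P'O: "P' \<in> Obj C" and lps': "length ps' = 3"
    and ps'h: "hom C (ps' ! 0) P' (As ! 0)" "hom C (ps' ! 1) P' (As ! 1)" "hom C (ps' ! 2) P' Q"
    using product_basic[OF prodP'] by (auto simp: less_Suc_eq numeral_2_eq_2 numeral_3_eq_3)
  define r where "r = tuple C P Q qs (drop 2 ps)"
  have r: "hom C r P Q \<and> (\<forall>i<n-2. Comp C (qs ! i) r = ps ! (i+2))"
    using tuple_props[OF prodQ PO, of "drop 2 ps"] psh lps assms(4) unfolding r_def
    by (auto simp: add.commute)
  define k where "k = tuple C P P' ps' [ps ! 0, ps ! 1, r]"
  have k: "hom C k P P' \<and> Comp C (ps' ! 0) k = ps ! 0 \<and> Comp C (ps' ! 1) k = ps ! 1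
      \<and> Comp C (ps' ! 2) k = r"
  proof -
    have "\<forall>i<length [As ! 0, As ! 1, Q]. hom C ([ps ! 0, ps ! 1, r] ! i) P ([As ! 0, As ! 1, Q] ! i)"
      using psh r assms(3) by (auto simp: less_Suc_eq numeral_2_eq_2 numeral_3_eq_3)
    from tuple_props[OF prodP' PO _ this] show ?thesis unfolding k_def by auto
  qed
  define T' where "T' fs = tuple C S P' ps' [fs ! 0, fs ! 1, tuple C S Q qs (drop 2 fs)]" for fs
  have keyeq: "Comp C k (tuple C S P ps fs) = T' fs \<and> hom C (tuple C S P ps fs) S P
       \<and> hom C (T' fs) S P'"
    if fl: "length fs = n" and fh: "\<forall>i<n. hom C (fs ! i) S (As ! i)" for fs
  proof -
    have T: "hom C (tuple C S P ps fs) S P \<and> (\<forall>i<n. Comp C (ps ! i) (tuple C S P ps fs) = fs ! i)"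
      using tuple_props[OF prodP assms(9), of fs] fl fh assms(4) by auto
    let ?t = "tuple C S P ps fs"
    have tq: "hom C (tuple C S Q qs (drop 2 fs)) S Q \<and>
        (\<forall>i<n-2. Comp C (qs ! i) (tuple C S Q qs (drop 2 fs)) = fs ! (i+2))"
      using tuple_props[OF prodQ assms(9), of "drop 2 fs"] fl fh assms(4) by (auto simp: add.commute)
    have rt: "Comp C r ?t = tuple C S Q qs (drop 2 fs)"
    proof (rule tuple_unique[OF prodQ assms(9)])
      show "length (drop 2 fs) = length (drop 2 As)" using fl assms(4) by simp
      show "\<forall>i<length (drop 2 As). hom C (drop 2 fs ! i) S (drop 2 As ! i)"
        using fl fh assms(4) by auto
      show "hom C (Comp C r ?t) S Q" using hom_comp[OF cat] T r by blast
      show "\<forall>i<length (drop 2 As). Comp C (qs ! i) (Comp C r ?t) = drop 2 fs ! i"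
      proof (intro allI impI)
        fix i assume i: "i < length (drop 2 As)"
        have "Comp C (qs ! i) (Comp C r ?t) = Comp C (Comp C (qs ! i) r) ?t"
          using hom_assoc[OF cat] T r qsh i assms(4) by (metis length_drop)
        also have "\<dots> = fs ! (i+2)" using r T i assms(4) by auto
        finally show "Comp C (qs ! i) (Comp C r ?t) = drop 2 fs ! i" using fl i assms(4)
          by (simp add: add.commute)
      qed
    qed
    have hT': "\<forall>i<length [As ! 0, As ! 1, Q].
        hom C ([fs ! 0, fs ! 1, tuple C S Q qs (drop 2 fs)] ! i) S ([As ! 0, As ! 1, Q] ! i)"
      using fh tq assms(3) by (auto simp: less_Suc_eq numeral_2_eq_2 numeral_3_eq_3)
    have "Comp C k ?t = T' fs" unfolding T'_def
    proof (rule tuple_unique[OF prodP' assms(9) _ hT'])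
      show "length [fs ! 0, fs ! 1, tuple C S Q qs (drop 2 fs)] = length [As ! 0, As ! 1, Q]" by simp
      show "hom C (Comp C k ?t) S P'" using hom_comp[OF cat] T k by blast
      have a0: "Comp C (ps' ! 0) (Comp C k ?t) = fs ! 0"
        using hom_assoc[OF cat, of ?t S P k P' "ps' ! 0"] T k ps'h assms(3) by auto
      have a1: "Comp C (ps' ! 1) (Comp C k ?t) = fs ! 1"
        using hom_assoc[OF cat, of ?t S P k P' "ps' ! 1"] T k ps'h assms(3) by auto
      have a2: "Comp C (ps' ! 2) (Comp C k ?t) = tuple C S Q qs (drop 2 fs)"
        using hom_assoc[OF cat, of ?t S P k P' "ps' ! 2"] T k ps'h rt by auto
      show "\<forall>i<length [As ! 0, As ! 1, Q]. Comp C (ps' ! i) (Comp C k ?t) =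
          [fs ! 0, fs ! 1, tuple C S Q qs (drop 2 fs)] ! i"
        using a0 a1 a2 by (auto simp: less_Suc_eq numeral_2_eq_2 numeral_3_eq_3)
    qed
    moreover have "hom C (T' fs) S P'"
      using tuple_props[OF prodP' assms(9) _ hT'] unfolding T'_def by simp
    ultimately show ?thesis using T by blast
  qed
  have kmono: "mono C k"
    unfolding mono_def
  proof (intro conjI allI impI)
    show "k \<in> Arr C" using k unfolding hom_def by blast
    fix g h W assume g: "hom C g W (Dom C k)" and h: "hom C h W (Dom C k)"
      and eq: "Comp C k g = Comp C k h"
    have dk: "Dom C k = P" using k unfolding hom_def by blast
    show "g = h"
    proof (rule prod_ext[OF cat prodP])
      show "hom C g W P" "hom C h W P" using g h dk by auto
      show "\<forall>i<length As. Comp C (ps ! i) g = Comp C (ps ! i) h"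
      proof (intro allI impI)
        fix i assume i: "i < length As"
        have gP: "hom C g W P" and hP: "hom C h W P" using g h dk by auto
        show "Comp C (ps ! i) g = Comp C (ps ! i) h"
        proof (cases "i < 2")
          case True
          then have "i = 0 \<or> i = 1" by auto
          then obtain j where pj: "ps ! i = Comp C (ps' ! j) k" "hom C (ps' ! j) P' (As ! i)"
            using k ps'h by (metis One_nat_def)
          show ?thesis unfolding pj(1)
            using hom_assoc[OF cat gP, of k P' "ps' ! j"] hom_assoc[OF cat hP, of k P' "ps' ! j"]
              k pj(2) eq by metis
        next
          case False
          define j where "j = i - 2"
          have j: "j < n - 2" "i = j + 2" using False i assms(4) unfolding j_def by auto
          have pi: "ps ! i = Comp C (qs ! j) (Comp C (ps' ! 2) k)" using r k j by auto
          have qh: "hom C (qs ! j) Q (As ! i)" using qsh j by auto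
          have pk: "hom C (Comp C (ps' ! 2) k) P Q" using hom_comp[OF cat] k ps'h(3) by blast
          have e1: "Comp C (ps ! i) g = Comp C (qs ! j) (Comp C (ps' ! 2) (Comp C k g))"
          proof -
            have "Comp C (ps ! i) g = Comp C (qs ! j) (Comp C (Comp C (ps' ! 2) k) g)"
              unfolding pi using hom_assoc[OF cat gP pk qh] by simp
            also have "\<dots> = Comp C (qs ! j) (Comp C (ps' ! 2) (Comp C k g))"
              using hom_assoc[OF cat gP _ ps'h(3), of k] k by simp
            finally show ?thesis .
          qed
          have e2: "Comp C (ps ! i) h = Comp C (qs ! j) (Comp C (ps' ! 2) (Comp C k h))"
          proof -
            have "Comp C (ps ! i) h = Comp C (qs ! j) (Comp C (Comp C (ps' ! 2) k) h)"
              unfolding pi using hom_assoc[OF cat hP pk qh] by simp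
            also have "\<dots> = Comp C (qs ! j) (Comp C (ps' ! 2) (Comp C k h))"
              using hom_assoc[OF cat hP _ ps'h(3), of k] k by simp
            finally show ?thesis .
          qed
          show ?thesis using e1 e2 eq by simp
        qed
      qed
    qed
  qed
  have mh: "hom C m (Dom C m) P" using assms(7,8) unfolding mono_def hom_def by blast
  define m' where "m' = Comp C k m"
  have m'h: "hom C m' (Dom C m) P'" using hom_comp[OF cat mh] k unfolding m'_def by blast
  have m'mono: "mono C m'"
    unfolding mono_def
  proof (intro conjI allI impI)
    show "m' \<in> Arr C" using m'h unfolding hom_def by blast
    fix g h W assume g: "hom C g W (Dom C m')" and h: "hom C h W (Dom C m')"
      and eq: "Comp C m' g = Comp C m' h"
    have dm: "Dom C m' = Dom C m" using m'h unfolding hom_def by blast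
    have "Comp C k (Comp C m g) = Comp C k (Comp C m h)"
      using eq hom_assoc[OF cat _ mh, of g W k P'] hom_assoc[OF cat _ mh, of h W k P'] g h dm k
      unfolding m'_def by metis
    moreover have "hom C (Comp C m g) W (Dom C k)" "hom C (Comp C m h) W (Dom C k)"
      using hom_comp[OF cat _ mh] g h dm k unfolding hom_def by auto
    ultimately have "Comp C m g = Comp C m h" using kmono unfolding mono_def by blast
    then show "g = h" using assms(7) g h dm unfolding mono_def by auto
  qed
  have m'cod: "Cod C m' = P'" using m'h unfolding hom_def by blast
  have transfer: "member C (tuple C S P ps fs) m \<longleftrightarrow> member C (T' fs) m'"
    if fl: "length fs = n" and fh: "\<forall>i<n. hom C (fs ! i) S (As ! i)" for fs
  proof -
    note K = keyeq[OF fl fh]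
    let ?t = "tuple C S P ps fs"
    have d1: "Dom C ?t = S" and d2: "Dom C (T' fs) = S" using K unfolding hom_def by auto
    show ?thesis
    proof
      assume "member C ?t m"
      then obtain u where u: "hom C u S (Dom C m)" "Comp C m u = ?t" unfolding member_def d1 by blast
      have "Comp C m' u = T' fs" using hom_assoc[OF cat u(1) mh, of k P'] k u(2) K
        unfolding m'_def by metis
      then show "member C (T' fs) m'" unfolding member_def d2 using u(1) m'h
        unfolding hom_def by auto
    next
      assume "member C (T' fs) m'"
      then obtain u where u: "hom C u S (Dom C m')" "Comp C m' u = T' fs" unfolding member_def d2 by blast
      have dm: "Dom C m' = Dom C m" using m'h unfolding hom_def by blast
      have "Comp C k (Comp C m u) = Comp C k ?t"
        using hom_assoc[OF cat _ mh, of u S k P'] u dm k K unfolding m'_def by metis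
      moreover have "hom C (Comp C m u) S (Dom C k)" "hom C ?t S (Dom C k)"
        using hom_comp[OF cat _ mh] u dm k K unfolding hom_def by auto
      ultimately have "Comp C m u = ?t" using kmono unfolding mono_def by blast
      then show "member C ?t m" unfolding member_def d1 using u dm by auto
    qed
  qed
  have updh: "\<forall>k<n. hom C (as[i := v] ! k) S (As ! k)" if "hom C v S (As ! i)" for i v
  proof (intro allI impI)
    fix k assume kn: "k < n"
    show "hom C (as[i := v] ! k) S (As ! k)"
    proof (cases "k = i")
      case True then show ?thesis using that kn assms(10) by simp
    next
      case False then show ?thesis using assms(11) kn by simp
    qed
  qed
  have t0: "member C (T' (as[0 := x])) m'" using transfer[of "as[0 := x]"] updh[OF assms(12)] assms(10,15) by simp
  have t1: "member C (T' (as[1 := y])) m'" using transfer[of "as[1 := y]"] updh[OF assms(13)] assms(10,16) by simp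
  have t2: "member C (T' (as[2 := z])) m'" using transfer[of "as[2 := z]"] updh[OF assms(14)] assms(10,17) by simp
  define w where "w = tuple C S Q qs (drop 2 as)"
  define w' where "w' = tuple C S Q qs (drop 2 (as[2 := z]))"
  have wh: "hom C w S Q" using keyeq tuple_props[OF prodQ assms(9), of "drop 2 as"] assms(4,10,11)
    unfolding w_def by auto
  have w'h: "hom C w' S Q" using tuple_props[OF prodQ assms(9), of "drop 2 (as[2 := z])"] assms(4,10) updh[OF assms(14)]
    unfolding w'_def by auto
  have e0: "T' (as[0 := x]) = tuple C S P' ps' [x, as ! 1, w]"
    unfolding T'_def w_def using assms(3,10) by (simp add: drop_update_cancel nth_list_update)
  have e1: "T' (as[1 := y]) = tuple C S P' ps' [as ! 0, y, w]"
    unfolding T'_def w_def using assms(3,10) by (simp add: drop_update_cancel nth_list_update)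
  have e2: "T' (as[2 := z]) = tuple C S P' ps' [as ! 0, as ! 1, w']"
    unfolding T'_def w'_def using assms(3,10) by (simp add: nth_list_update)
  have e3: "T' as = tuple C S P' ps' [as ! 0, as ! 1, w]"
    unfolding T'_def w_def by simp
  have h0: "hom C (as ! 0) S (As ! 0)" and h1: "hom C (as ! 1) S (As ! 1)" using assms(3,11) by auto
  have "member C (T' as) m'"
    unfolding e3
    using maj[THEN conjunct2, THEN conjunct2, rule_format, OF A0 A1 QO prodP' m'mono m'cod assms(9)
        h0 assms(12) h1 assms(13) wh w'h] t0 t1 t2 e0 e1 e2 by simp
  then show ?thesis using transfer[of as] assms(10,11) by simp
qed

end
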